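(* Let $N\ge 2$ and $d\ge 1$. Let $L^{\sharp}(\mathbf q^{(0)},\dots,\mathbf q^{(N-1)},t)$ be an $(N-1)$-th order Lagrangian (possibly singular, possibly explicitly time dependent) in the coordinates $q^i$, $i=1,\dots,d$. Suppose its Ostrogradski canonical theory has only first-class constraints $\gamma^{\sharp}_a(\mathbf q_\sharp,\mathbf p^\sharp,t)\approx 0$ (primary and secondary), and canonical Hamiltonian $H^{\sharp}(\mathbf q_\sharp,\mathbf p^\sharp,t)$. Assume $H^\sharp$ and all $\gamma^\sharp_a$ are polynomials in the momenta $p^\sharp_{Ai}$, quantized with a fixed operator ordering. Let $W(\mathbf q^{(0)},\dots,\mathbf q^{(N-1)},t)$ be an arbitrary smooth function, and put $$L:=L^\sharp+\frac{dW}{dt},$$ an $N$-th order Lagrangian. Treat $L$ by the extended Ostrogradski formalism described in the context. Its quantum mechanics is then given by three conditions on wave functions $\psi(\mathbf q,t)$, where $\mathbf q=(q^{Ii})_{I=0,\dots,N-1}$: $$i\hbar\,\partial_t\psi=\Big[\hat H^\sharp\Big(\mathbf q_\sharp,\,-i\hbar\tfrac{\partial}{\partial \mathbf q_\sharp}-\tfrac{\partial W}{\partial \mathbf q_\sharp},\,t\Big)-\tfrac{\partial W}{\partial t}\Big]\psi,$$ $$\Big(-i\hbar\tfrac{\partial}{\partial q^{N-1,i}}-\tfrac{\partial W}{\partial q^{N-1,i}}\Big)\psi=0\quad (i=1,\dots,d),$$ $$\hat\gamma^\sharp_a\Big(\mathbf q_\sharp,\,-i\hbar\tfrac{\partial}{\partial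 \mathbf q_\sharp}-\tfrac{\partial W}{\partial \mathbf q_\sharp},\,t\Big)\psi=0\quad\text{for all }a .$$ The quantum mechanics of $L^\sharp$ is given by two conditions on wave functions $\psi^\sharp(\mathbf q_\sharp,t)$: $$i\hbar\,\partial_t\psi^\sharp=\hat H^\sharp\Big(\mathbf q_\sharp,-i\hbar\tfrac{\partial}{\partial\mathbf q_\sharp},t\Big)\psi^\sharp,\qquad \hat\gamma^\sharp_a\Big(\mathbf q_\sharp,-i\hbar\tfrac{\partial}{\partial\mathbf q_\sharp},t\Big)\psi^\sharp=0 .$$ Then a function $\psi(\mathbf q,t)$ satisfies the three conditions for $L$ if and only if $$\psi(\mathbf q,t)=\psi^\sharp(\mathbf q_\sharp,t)\exp\!\big(iW(\mathbf q,t)/\hbar\big)$$ for a function $\psi^\sharp$ satisfying the two conditions for $L^\sharp$. Thus the $N$-th order Lagrangian $L$ and the $(N-1)$-th order Lagrangian $L^\sharp$ lead to the same quantum mechanics.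
   Context: Ostrogradski formalism: for an $N$-th order Lagrangian $L(\mathbf q^{(0)},\dots,\mathbf q^{(N)},t)$ with $q^{(I)i}=d^Iq^i/dt^I$, the canonical variables are $q^{Ii}:=q^{(I)i}$ and $p_{Ii}:=\sum_{K=I+1}^{N}(-d/dt)^{K-I-1}\partial L/\partial q^{(K)i}$, for $I=0,\dots,N-1$. The Poisson bracket is $\{F,G\}=\sum_{I,i}\big(\partial_{q^{Ii}}F\,\partial_{p_{Ii}}G-\partial_{p_{Ii}}F\,\partial_{q^{Ii}}G\big)$. Quantization (Dirac): when all constraints are first class, one uses the Schrödinger picture with $\hat q^{Ii}=q^{Ii}$ and $\hat p_{Ii}=-i\hbar\,\partial/\partial q^{Ii}$. The wave function obeys $i\hbar\partial_t\psi=\hat H\psi$ with $H$ the canonical Hamiltonian, and satisfies $\hat\gamma\psi=0$ for every first-class constraint $\gamma$. Notation: indices $A,B$ run over $0,\dots,N-2$; $\mathbf q_\sharp=(q^{Ai})$ and $\mathbf p^\sharp=(p^\sharp_{Ai})$ are the Ostrogradski variables of $L^\sharp$. Repeated indices are summed. Extended formalism for $L$: the phase space has coordinates $q^{Ii},p_{Ii}$, $I=0,\dots,N-1$. Define the shifted momenta $p^\sharp_{Ai}:=p_{Ai}-\partial W/\partial q^{Ai}$. The canonical Hamiltonian is $H(\mathbf q,\mathbf p,t)=H^\sharp(\mathbf q_\sharp,\mathbf p^\sharp,t)-\partial W/\partial t$. The constraints are $\gamma_i:=p_{N-1,i}-\partial W/\partial q^{N-1,i}\approx 0$ together with the $\gamma^\sharp_a(\mathbf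 q_\sharp,\mathbf p^\sharp,t)\approx0$, all of which are first class. *)

theory Defs
  imports "HOL-Analysis.Analysis"
begin

text \<open>Configurations: q I i is the coordinate q^{I i}; only I < n and i < d are used
  (index i = 1..d of the paper is shifted to 0..d-1). Other entries are fixed to 0.\<close>
type_synonym cfg = "nat \<Rightarrow> nat \<Rightarrow> real"
type_synonym wfun = "cfg \<Rightarrow> real \<Rightarrow> complex"

definition cfgs :: "nat \<Rightarrow> nat \<Rightarrow> cfg set" where
  "cfgs n d = {q. \<forall>I i. (n \<le> I \<or> d \<le> i) \<longrightarrow> q I i = 0}"

definition cupd :: "cfg \<Rightarrow> nat \<Rightarrow> nat \<Rightarrow> real \<Rightarrow> cfg" where
  "cupd q I i s = q(I := (q I)(i := s))"

definition sharp :: "nat \<Rightarrow> nat \<Rightarrow> cfg \<Rightarrow> cfg" where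
  "sharp N d q = (\<lambda>I i. if I < N - 1 \<and> i < d then q I i else 0)"

definition has_pd :: "cfg set \<Rightarrow> (cfg \<Rightarrow> real \<Rightarrow> 'b::real_normed_vector) \<Rightarrow> nat \<Rightarrow> nat
     \<Rightarrow> (cfg \<Rightarrow> real \<Rightarrow> 'b) \<Rightarrow> bool" where
  "has_pd Q F I i G \<longleftrightarrow>
     (\<forall>q\<in>Q. \<forall>t. ((\<lambda>s. F (cupd q I i s) t) has_vector_derivative G q t) (at (q I i)))"

definition has_pt :: "cfg set \<Rightarrow> (cfg \<Rightarrow> real \<Rightarrow> 'b::real_normed_vector)
     \<Rightarrow> (cfg \<Rightarrow> real \<Rightarrow> 'b) \<Rightarrow> bool" where
  "has_pt Q F G \<longleftrightarrow> (\<forall>q\<in>Q. \<forall>t. ((\<lambda>s. F q s) has_vector_derivative G q t) (at t))"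

definition pd :: "(cfg \<Rightarrow> real \<Rightarrow> real) \<Rightarrow> nat \<Rightarrow> nat \<Rightarrow> cfg \<Rightarrow> real \<Rightarrow> real" where
  "pd F I i q t = vector_derivative (\<lambda>s. F (cupd q I i s) t) (at (q I i))"

definition pt :: "(cfg \<Rightarrow> real \<Rightarrow> real) \<Rightarrow> cfg \<Rightarrow> real \<Rightarrow> real" where
  "pt F q t = vector_derivative (\<lambda>s. F q s) (at t)"

text \<open>Smooth (C-infinity) real functions of (q,t) on cfgs n d: all iterated partial
  derivatives (in the coordinates q^{I i}, I<n, i<d, and in t) exist.\<close>
coinductive smooth_cfg :: "nat \<Rightarrow> nat \<Rightarrow> (cfg \<Rightarrow> real \<Rightarrow> real) \<Rightarrow> bool" for n d where
  "(\<forall>I<n. \<forall>i<d. \<exists>G. has_pd (cfgs n d) F I i G \<and> smooth_cfg n d G) \<Longrightarrow>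
   (\<exists>G. has_pt (cfgs n d) F G \<and> smooth_cfg n d G) \<Longrightarrow> smooth_cfg n d F"

text \<open>This covers every polynomial in the momenta with any fixed operator ordering.\<close>
datatype qop = QMul "cfg \<Rightarrow> real \<Rightarrow> complex" | QMom nat nat | QComp qop qop | QAdd qop qop

fun qop_wf :: "nat \<Rightarrow> nat \<Rightarrow> qop \<Rightarrow> bool" where
  "qop_wf n d (QMul c) = True"
| "qop_wf n d (QMom A i) = (A < n \<and> i < d)"
| "qop_wf n d (QComp e1 e2) = (qop_wf n d e1 \<and> qop_wf n d e2)"
| "qop_wf n d (QAdd e1 e2) = (qop_wf n d e1 \<and> qop_wf n d e2)"

inductive op_app :: "(nat \<Rightarrow> nat \<Rightarrow> wfun \<Rightarrow> wfun \<Rightarrow> bool) \<Rightarrow> (cfg \<Rightarrow> cfg)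
    \<Rightarrow> qop \<Rightarrow> wfun \<Rightarrow> wfun \<Rightarrow> bool" for mom proj where
  "op_app mom proj (QMul c) \<psi> (\<lambda>q t. c (proj q) t * \<psi> q t)"
| "mom A i \<psi> \<phi> \<Longrightarrow> op_app mom proj (QMom A i) \<psi> \<phi>"
| "op_app mom proj e2 \<psi> \<psi>m \<Longrightarrow> op_app mom proj e1 \<psi>m \<phi> \<Longrightarrow> op_app mom proj (QComp e1 e2) \<psi> \<phi>"
| "op_app mom proj e1 \<psi> \<phi>1 \<Longrightarrow> op_app mom proj e2 \<psi> \<phi>2 \<Longrightarrow>
   op_app mom proj (QAdd e1 e2) \<psi> (\<lambda>q t. \<phi>1 q t + \<phi>2 q t)"

definition mom_shift :: "real \<Rightarrow> cfg set \<Rightarrow> (cfg \<Rightarrow> real \<Rightarrow> real)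
    \<Rightarrow> nat \<Rightarrow> nat \<Rightarrow> wfun \<Rightarrow> wfun \<Rightarrow> bool" where
  "mom_shift hbar Q W A i \<psi> \<phi> \<longleftrightarrow> (\<exists>G. has_pd Q \<psi> A i G \<and>
     (\<forall>q\<in>Q. \<forall>t. \<phi> q t = - \<i> * complex_of_real hbar * G q t
                          - complex_of_real (pd W A i q t) * \<psi> q t))"

definition mom_std :: "real \<Rightarrow> cfg set \<Rightarrow> nat \<Rightarrow> nat \<Rightarrow> wfun \<Rightarrow> wfun \<Rightarrow> bool" where
  "mom_std hbar Q A i \<psi> \<phi> \<longleftrightarrow> (\<exists>G. has_pd Q \<psi> A i G \<and>
     (\<forall>q\<in>Q. \<forall>t. \<phi> q t = - \<i> * complex_of_real hbar * G q t))"

definition quantum_L :: "nat \<Rightarrow> nat \<Rightarrow> real \<Rightarrow> (cfg \<Rightarrow> real \<Rightarrow> real) \<Rightarrow> qop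
    \<Rightarrow> ('a \<Rightarrow> qop) \<Rightarrow> wfun \<Rightarrow> bool" where
  "quantum_L N d hbar W H \<gamma> \<psi> \<longleftrightarrow>
     (let Q = cfgs N d; mom = mom_shift hbar Q W; proj = sharp N d in
       (\<exists>Gt \<phi>. has_pt Q \<psi> Gt \<and> op_app mom proj H \<psi> \<phi> \<and>
          (\<forall>q\<in>Q. \<forall>t. \<i> * complex_of_real hbar * Gt q t
                        = \<phi> q t - complex_of_real (pt W q t) * \<psi> q t))
     \<and> (\<forall>i<d. mom (N - 1) i \<psi> (\<lambda>_ _. 0))
     \<and> (\<forall>a. \<exists>\<phi>. op_app mom proj (\<gamma> a) \<psi> \<phi> \<and> (\<forall>q\<in>Q. \<forall>t. \<phi> q t = 0)))"

definition quantum_Lsharp :: "nat \<Rightarrow> nat \<Rightarrow> real \<Rightarrow> qop \<Rightarrow> ('a \<Rightarrow> qop) \<Rightarrow> wfun \<Rightarrow> bool" where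
  "quantum_Lsharp N d hbar H \<gamma> \<psi> \<longleftrightarrow>
     (let Q = cfgs (N - 1) d; mom = mom_std hbar Q; proj = id in
       (\<exists>Gt \<phi>. has_pt Q \<psi> Gt \<and> op_app mom proj H \<psi> \<phi> \<and>
          (\<forall>q\<in>Q. \<forall>t. \<i> * complex_of_real hbar * Gt q t = \<phi> q t))
     \<and> (\<forall>a. \<exists>\<phi>. op_app mom proj (\<gamma> a) \<psi> \<phi> \<and> (\<forall>q\<in>Q. \<forall>t. \<phi> q t = 0)))"

end

theory Submission imports Defs begin

lemma phase_deriv:
  fixes f :: "real \<Rightarrow> real" and c :: complex
  assumes "(f has_vector_derivative w) (at x)"
  shows "((\<lambda>s. exp (c * of_real (f s))) has_vector_derivative exp (c * of_real (f x)) * (c * of_real w)) (at x)"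
proof -
  have "((\<lambda>s. c * of_real (f s)) has_vector_derivative c * of_real w) (at x)"
    using assms by (intro has_vector_derivative_mult_right has_vector_derivative_of_real)
       (simp add: has_real_derivative_iff_has_vector_derivative)
  from field_vector_diff_chain_at[OF this DERIV_exp]
  show ?thesis by (simp add: o_def mult.commute)
qed

lemma cupd_app[simp]: "cupd q I i s I i = s" by (simp add: cupd_def)
lemma cupd_same[simp]: "cupd q I i (q I i) = q" by (simp add: cupd_def)
lemma cupd_cupd[simp]: "cupd (cupd q I i s) I i s' = cupd q I i s'" by (simp add: cupd_def)
lemma cupd_in: "q \<in> cfgs n d \<Longrightarrow> I < n \<Longrightarrow> i < d \<Longrightarrow> cupd q I i s \<in> cfgs n d"
  by (auto simp: cupd_def cfgs_def)
lemma sharp_cupd_lt: "A < N - 1 \<Longrightarrow> i < d \<Longrightarrow> sharp N d (cupd q A i s) = cupd (sharp N d q) A i s"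
  by (auto simp: sharp_def cupd_def fun_eq_iff)
lemma sharp_cupd_last: "sharp N d (cupd q (N-1) i s) = sharp N d q"
  by (auto simp: sharp_def cupd_def fun_eq_iff)
lemma sharp_in: "sharp N d q \<in> cfgs (N-1) d" by (auto simp: sharp_def cfgs_def)
lemma cfgs_mono: "cfgs (N-1) d \<subseteq> cfgs N d" by (auto simp: cfgs_def)
lemma sharp_id: "q \<in> cfgs (N-1) d \<Longrightarrow> sharp N d q = q" by (auto simp: sharp_def cfgs_def fun_eq_iff)
lemma sharp_sharp[simp]: "sharp N d (sharp N d q) = sharp N d q" by (auto simp: sharp_def fun_eq_iff)
lemma sharp_apply: "A < N-1 \<Longrightarrow> i<d \<Longrightarrow> sharp N d q A i = q A i" by (simp add: sharp_def)
lemma cupd_sharp_same: "A < N-1 \<Longrightarrow> i<d \<Longrightarrow> cupd (sharp N d q) A i (q A i) = sharp N d q"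
  by (metis cupd_same sharp_apply)

locale S =
  fixes N d :: nat and hbar :: real and W :: "cfg \<Rightarrow> real \<Rightarrow> real"
  assumes N2: "N \<ge> 2" and hb: "hbar > 0"
    and Wpd: "\<And>I i. I < N \<Longrightarrow> i < d \<Longrightarrow> \<exists>G. has_pd (cfgs N d) W I i G"
    and Wpt: "\<exists>G. has_pt (cfgs N d) W G"
begin

abbreviation "Q \<equiv> cfgs N d"
abbreviation "Qs \<equiv> cfgs (N-1) d"

definition E :: "cfg \<Rightarrow> real \<Rightarrow> complex" where
  "E q t = exp (\<i> * complex_of_real (W q t) / complex_of_real hbar)"
definition Ei :: "cfg \<Rightarrow> real \<Rightarrow> complex" where
  "Ei q t = exp (- (\<i> / complex_of_real hbar) * complex_of_real (W q t))"

lemma E_alt: "E q t = exp ((\<i> / complex_of_real hbar) * complex_of_real (W q t))"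
  by (simp add: E_def)

lemma E_Ei: "E q t * Ei q t = 1"
  by (simp add: E_alt Ei_def flip: exp_add)
lemma Ei_E: "Ei q t * E q t = 1"
  by (simp add: E_alt Ei_def flip: exp_add)
lemma E_nz: "E q t \<noteq> 0" by (simp add: E_def)

lemma hb0: "complex_of_real hbar \<noteq> 0" using hb by simp

lemma Wline: assumes "q \<in> Q" "I < N" "i < d"
  shows "((\<lambda>s. W (cupd q I i s) t) has_vector_derivative pd W I i q t) (at (q I i))"
proof -
  obtain G where G: "has_pd Q W I i G" using Wpd assms by blast
  then have "((\<lambda>s. W (cupd q I i s) t) has_vector_derivative G q t) (at (q I i))"
    using assms unfolding has_pd_def by blast
  moreover then have "pd W I i q t = G q t" by (simp add: pd_def vector_derivative_at)
  ultimately show ?thesis by simp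
qed

lemma Wtime: assumes "q \<in> Q"
  shows "((\<lambda>s. W q s) has_vector_derivative pt W q t) (at t)"
proof -
  obtain G where G: "has_pt Q W G" using Wpt by blast
  then have "((\<lambda>s. W q s) has_vector_derivative G q t) (at t)"
    using assms unfolding has_pt_def by blast
  moreover then have "pt W q t = G q t" by (simp add: pt_def vector_derivative_at)
  ultimately show ?thesis by simp
qed

lemma Eline: assumes "q \<in> Q" "I < N" "i < d"
  shows "((\<lambda>s. E (cupd q I i s) t) has_vector_derivative
     E q t * ((\<i> / complex_of_real hbar) * of_real (pd W I i q t))) (at (q I i))"
  using phase_deriv[OF Wline[OF assms], of "\<i> / complex_of_real hbar"] by (simp add: E_alt)

lemma Eiline: assumes "q \<in> Q" "I < N" "i < d"
  shows "((\<lambda>s. Ei (cupd q I i s) t) has_vector_derivative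
     Ei q t * (- (\<i> / complex_of_real hbar) * of_real (pd W I i q t))) (at (q I i))"
  using phase_deriv[OF Wline[OF assms], of "- (\<i> / complex_of_real hbar)"] by (simp add: Ei_def)

lemma Etime: assumes "q \<in> Q"
  shows "((\<lambda>s. E q s) has_vector_derivative
     E q t * ((\<i> / complex_of_real hbar) * of_real (pt W q t))) (at t)"
  using phase_deriv[OF Wtime[OF assms], of "\<i> / complex_of_real hbar"] by (simp add: E_alt)

lemma Eitime: assumes "q \<in> Q"
  shows "((\<lambda>s. Ei q s) has_vector_derivative
     Ei q t * (- (\<i> / complex_of_real hbar) * of_real (pt W q t))) (at t)"
  using phase_deriv[OF Wtime[OF assms], of "- (\<i> / complex_of_real hbar)"] by (simp add: Ei_def)

lemma sharpQ: "sharp N d q \<in> Q" using sharp_in cfgs_mono by blast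
lemma QsQ: "q \<in> Qs \<Longrightarrow> q \<in> Q" using cfgs_mono by blast


lemma fwd:
  assumes "op_app (mom_std hbar Qs) id e \<psi>s \<phi>s" "qop_wf (N-1) d e"
    "\<forall>q\<in>Q. \<forall>t. \<psi> q t = \<psi>s (sharp N d q) t * E q t"
  shows "\<exists>\<phi>. op_app (mom_shift hbar Q W) (sharp N d) e \<psi> \<phi> \<and>
           (\<forall>q\<in>Q. \<forall>t. \<phi> q t = \<phi>s (sharp N d q) t * E q t)"
  using assms
proof (induction arbitrary: \<psi> rule: op_app.induct)
  case (1 c \<psi>s)
  show ?case
    by (rule exI[of _ "\<lambda>q t. c (sharp N d q) t * \<psi> q t"]) (use 1 in \<open>auto intro: op_app.intros\<close>)
next
  case (2 A i \<psi>s \<phi>s)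
  have Ai: "A < N - 1" "i < d" using 2 by auto
  have AN: "A < N" using Ai by simp
  obtain Gs where Gs: "has_pd Qs \<psi>s A i Gs" "\<forall>q\<in>Qs. \<forall>t. \<phi>s q t = - \<i> * complex_of_real hbar * Gs q t"
    using 2(1) unfolding mom_std_def by blast
  define G where "G q t = \<psi>s (sharp N d q) t * (E q t * ((\<i> / complex_of_real hbar) * of_real (pd W A i q t)))
      + Gs (sharp N d q) t * E q t" for q t
  have hpd: "has_pd Q \<psi> A i G" unfolding has_pd_def
  proof (intro ballI allI)
    fix q t assume q: "q \<in> Q"
    have eq: "(\<lambda>s. \<psi> (cupd q A i s) t) = (\<lambda>s. \<psi>s (cupd (sharp N d q) A i s) t * E (cupd q A i s) t)"
      using 2(3) cupd_in[OF q AN Ai(2)] sharp_cupd_lt[OF Ai] by auto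
    have d1: "((\<lambda>s. \<psi>s (cupd (sharp N d q) A i s) t) has_vector_derivative Gs (sharp N d q) t) (at (q A i))"
      using Gs(1) sharp_in[of N d q] sharp_apply[OF Ai, of q] unfolding has_pd_def by metis
    show "((\<lambda>s. \<psi> (cupd q A i s) t) has_vector_derivative G q t) (at (q A i))"
      using has_vector_derivative_mult[OF d1 Eline[OF q AN Ai(2)]]
      unfolding eq G_def by (simp add: cupd_sharp_same[OF Ai])
  qed
  show ?case
  proof (intro exI conjI)
    show "op_app (mom_shift hbar Q W) (sharp N d) (QMom A i) \<psi>
      (\<lambda>q t. - \<i> * complex_of_real hbar * G q t - complex_of_real (pd W A i q t) * \<psi> q t)"
      by (rule op_app.intros(2)) (use hpd in \<open>auto simp: mom_shift_def\<close>)
    show "\<forall>q\<in>Q. \<forall>t. - \<i> * complex_of_real hbar * G q t - complex_of_real (pd W A i q t) * \<psi> q t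
       = \<phi>s (sharp N d q) t * E q t"
      using Gs(2) sharp_in[of N d] 2(3) hb0 by (auto simp: G_def field_simps)
  qed
next
  case (3 e2 \<psi>s \<psi>m e1 \<phi>s)
  obtain \<phi>2 where p2: "op_app (mom_shift hbar Q W) (sharp N d) e2 \<psi> \<phi>2"
      "\<forall>q\<in>Q. \<forall>t. \<phi>2 q t = \<psi>m (sharp N d q) t * E q t"
    using 3(3)[of \<psi>] 3(5,6) by auto
  obtain \<phi>1 where p1: "op_app (mom_shift hbar Q W) (sharp N d) e1 \<phi>2 \<phi>1"
      "\<forall>q\<in>Q. \<forall>t. \<phi>1 q t = \<phi>s (sharp N d q) t * E q t"
    using 3(4)[OF _ p2(2)] 3(5) by auto
  show ?case using p1 p2 by (auto intro: op_app.intros(3))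
next
  case (4 e1 \<psi>s \<phi>1 e2 \<phi>2)
  obtain a1 where p1: "op_app (mom_shift hbar Q W) (sharp N d) e1 \<psi> a1"
      "\<forall>q\<in>Q. \<forall>t. a1 q t = \<phi>1 (sharp N d q) t * E q t"
    using 4(3)[of \<psi>] 4(5,6) by auto
  obtain a2 where p2: "op_app (mom_shift hbar Q W) (sharp N d) e2 \<psi> a2"
      "\<forall>q\<in>Q. \<forall>t. a2 q t = \<phi>2 (sharp N d q) t * E q t"
    using 4(4)[of \<psi>] 4(5,6) by auto
  show ?case using p1 p2 by (auto intro!: exI op_app.intros(4) simp: distrib_right)
qed


lemma bwd:
  assumes "op_app (mom_shift hbar Q W) (sharp N d) e \<psi> \<phi>" "qop_wf (N-1) d e"
    "\<forall>q\<in>Q. \<forall>t. \<psi> q t = \<psi>s (sharp N d q) t * E q t"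
  shows "\<exists>\<phi>s. op_app (mom_std hbar Qs) id e \<psi>s \<phi>s \<and>
           (\<forall>q\<in>Q. \<forall>t. \<phi> q t = \<phi>s (sharp N d q) t * E q t)"
  using assms
proof (induction arbitrary: \<psi>s rule: op_app.induct)
  case (1 c \<psi>)
  show ?case
    by (rule exI[of _ "\<lambda>q t. c (id q) t * \<psi>s q t"]) (use 1 in \<open>auto intro: op_app.intros\<close>)
next
  case (2 A i \<psi> \<phi>)
  have Ai: "A < N - 1" "i < d" using 2 by auto
  have AN: "A < N" using Ai by simp
  obtain G where G: "has_pd Q \<psi> A i G" "\<forall>q\<in>Q. \<forall>t. \<phi> q t = - \<i> * complex_of_real hbar * G q t
         - complex_of_real (pd W A i q t) * \<psi> q t"
    using 2(1) unfolding mom_shift_def by blast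
  define D where "D q t = \<psi> q t * (Ei q t * (- (\<i> / complex_of_real hbar) * of_real (pd W A i q t)))
      + G q t * Ei q t" for q t
  have key: "((\<lambda>s. \<psi>s (cupd (sharp N d q) A i s) t) has_vector_derivative D q t) (at (q A i))"
    if q: "q \<in> Q" for q t
  proof -
    have eq: "(\<lambda>s. \<psi>s (cupd (sharp N d q) A i s) t) = (\<lambda>s. \<psi> (cupd q A i s) t * Ei (cupd q A i s) t)"
    proof
      fix s
      have "\<psi> (cupd q A i s) t * Ei (cupd q A i s) t
          = \<psi>s (cupd (sharp N d q) A i s) t * (E (cupd q A i s) t * Ei (cupd q A i s) t)"
        using 2(3) cupd_in[OF q AN Ai(2)] sharp_cupd_lt[OF Ai] by auto
      then show "\<psi>s (cupd (sharp N d q) A i s) t = \<psi> (cupd q A i s) t * Ei (cupd q A i s) t"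
        by (simp add: E_Ei)
    qed
    have d1: "((\<lambda>s. \<psi> (cupd q A i s) t) has_vector_derivative G q t) (at (q A i))"
      using G(1) q unfolding has_pd_def by blast
    show ?thesis
      using has_vector_derivative_mult[OF d1 Eiline[OF q AN Ai(2)]]
      unfolding eq D_def by simp
  qed
  define Gs where "Gs q t = vector_derivative (\<lambda>s. \<psi>s (cupd q A i s) t) (at (q A i))" for q t
  have GsD: "Gs (sharp N d q) t = D q t" if "q \<in> Q" for q t
    using vector_derivative_at[OF key[OF that, of t]] sharp_apply[OF Ai, of q] unfolding Gs_def by simp
  have hpd: "has_pd Qs \<psi>s A i Gs" unfolding has_pd_def
  proof (intro ballI allI)
    fix q t assume q: "q \<in> Qs"
    have qQ: "q \<in> Q" using QsQ[OF q] .
    show "((\<lambda>s. \<psi>s (cupd q A i s) t) has_vector_derivative Gs q t) (at (q A i))"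
      using key[OF qQ, of t] GsD[OF qQ, of t] sharp_id[OF q] by simp
  qed
  show ?case
  proof (intro exI conjI)
    show "op_app (mom_std hbar Qs) id (QMom A i) \<psi>s (\<lambda>q t. - \<i> * complex_of_real hbar * Gs q t)"
      by (rule op_app.intros(2)) (use hpd in \<open>auto simp: mom_std_def\<close>)
    show "\<forall>q\<in>Q. \<forall>t. \<phi> q t = - \<i> * complex_of_real hbar * Gs (sharp N d q) t * E q t"
    proof (intro ballI allI)
      fix q t assume q: "q \<in> Q"
      have e: "Ei q t * E q t = 1" by (rule Ei_E)
      have "- \<i> * complex_of_real hbar * Gs (sharp N d q) t * E q t
         = - \<i> * complex_of_real hbar * (\<psi> q t * (- (\<i> / complex_of_real hbar) * of_real (pd W A i q t))
            + G q t) * (Ei q t * E q t)"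
        unfolding GsD[OF q] D_def by (simp add: algebra_simps)
      also have "\<dots> = - \<i> * complex_of_real hbar * G q t - complex_of_real (pd W A i q t) * \<psi> q t"
        unfolding e using hb0 by (simp add: field_simps)
      finally show "\<phi> q t = - \<i> * complex_of_real hbar * Gs (sharp N d q) t * E q t"
        using G(2) q by simp
    qed
  qed
next
  case (3 e2 \<psi> \<psi>m e1 \<phi>)
  obtain \<phi>2 where p2: "op_app (mom_std hbar Qs) id e2 \<psi>s \<phi>2"
      "\<forall>q\<in>Q. \<forall>t. \<psi>m q t = \<phi>2 (sharp N d q) t * E q t"
    using 3(3)[of \<psi>s] 3(5,6) by (simp add: id_def) blast
  obtain \<phi>1 where p1: "op_app (mom_std hbar Qs) id e1 \<phi>2 \<phi>1"
      "\<forall>q\<in>Q. \<forall>t. \<phi> q t = \<phi>1 (sharp N d q) t * E q t"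
    using 3(4)[OF _ p2(2)] 3(5) by (simp add: id_def) blast
  show ?case using p1 p2 unfolding id_def by (auto intro: op_app.intros(3))
next
  case (4 e1 \<psi> \<phi>1 e2 \<phi>2)
  obtain a1 where p1: "op_app (mom_std hbar Qs) id e1 \<psi>s a1"
      "\<forall>q\<in>Q. \<forall>t. \<phi>1 q t = a1 (sharp N d q) t * E q t"
    using 4(3)[of \<psi>s] 4(5,6) by (simp add: id_def) blast
  obtain a2 where p2: "op_app (mom_std hbar Qs) id e2 \<psi>s a2"
      "\<forall>q\<in>Q. \<forall>t. \<phi>2 q t = a2 (sharp N d q) t * E q t"
    using 4(4)[of \<psi>s] 4(5,6) by (simp add: id_def) blast
  show ?case using p1 p2 unfolding id_def by (auto intro!: exI op_app.intros(4) simp: distrib_right)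
qed


lemma const_last:
  assumes C: "\<forall>i<d. mom_shift hbar Q W (N-1) i \<psi> (\<lambda>_ _. 0)" and q: "q \<in> Q" and i: "i < d"
  shows "\<psi> (cupd q (N-1) i s) t * Ei (cupd q (N-1) i s) t = \<psi> q t * Ei q t"
proof -
  have NN: "N - 1 < N" using N2 by simp
  obtain G where G: "has_pd Q \<psi> (N-1) i G" "\<forall>q\<in>Q. \<forall>t. 0 = - \<i> * complex_of_real hbar * G q t
         - complex_of_real (pd W (N-1) i q t) * \<psi> q t"
    using C i unfolding mom_shift_def by blast
  define f where "f s = \<psi> (cupd q (N-1) i s) t * Ei (cupd q (N-1) i s) t" for s
  have "(f has_vector_derivative 0) (at x within UNIV)" for x
  proof -
    define p where "p = cupd q (N-1) i x"
    have p: "p \<in> Q" unfolding p_def using cupd_in[OF q NN i] .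
    have px: "p (N-1) i = x" by (simp add: p_def)
    have fe: "f = (\<lambda>s. \<psi> (cupd p (N-1) i s) t * Ei (cupd p (N-1) i s) t)"
      by (simp add: f_def p_def fun_eq_iff)
    have d1: "((\<lambda>s. \<psi> (cupd p (N-1) i s) t) has_vector_derivative G p t) (at (p (N-1) i))"
      using G(1) p unfolding has_pd_def by blast
    note d2 = Eiline[OF p NN i, of t]
    have Gp: "G p t = \<i> * complex_of_real (pd W (N-1) i p t) * \<psi> p t / complex_of_real hbar"
    proof -
      have "0 = - \<i> * complex_of_real hbar * G p t - complex_of_real (pd W (N-1) i p t) * \<psi> p t"
        using G(2) p by blast
      then have "\<i> * (- \<i> * complex_of_real hbar * G p t) = \<i> * (complex_of_real (pd W (N-1) i p t) * \<psi> p t)"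
        by (simp add: algebra_simps)
      then have "complex_of_real hbar * G p t = \<i> * complex_of_real (pd W (N-1) i p t) * \<psi> p t"
        by (simp add: algebra_simps)
      then show ?thesis using hb0 by (simp add: field_simps)
    qed
    show ?thesis
      using has_vector_derivative_mult[OF d1 d2] unfolding fe Gp px[symmetric]
      by (simp add: algebra_simps)
  qed
  then obtain c where "\<And>x. x \<in> UNIV \<Longrightarrow> f x = c"
    by (rule has_vector_derivative_zero_constant[OF convex_UNIV]) blast
  then have "f s = f (q (N-1) i)" by simp
  then show ?thesis by (simp add: f_def)
qed

definition zk :: "nat \<Rightarrow> cfg \<Rightarrow> cfg" where
  "zk k q = (\<lambda>I j. if I = N - 1 \<and> j < k then 0 else q I j)"

lemma zk_all:
  assumes C: "\<forall>i<d. mom_shift hbar Q W (N-1) i \<psi> (\<lambda>_ _. 0)" and q: "q \<in> Q"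
  shows "k \<le> d \<Longrightarrow> zk k q \<in> Q \<and> \<psi> (zk k q) t * Ei (zk k q) t = \<psi> q t * Ei q t"
proof (induction k)
  case 0
  have "zk 0 q = q" by (simp add: zk_def)
  then show ?case using q by simp
next
  case (Suc k)
  have k: "k < d" using Suc by simp
  have NN: "N - 1 < N" using N2 by simp
  have z: "zk (Suc k) q = cupd (zk k q) (N-1) k 0"
    by (auto simp: zk_def cupd_def fun_eq_iff)
  have IH: "zk k q \<in> Q" "\<psi> (zk k q) t * Ei (zk k q) t = \<psi> q t * Ei q t" using Suc by auto
  show ?case unfolding z using cupd_in[OF IH(1) NN k] const_last[OF C IH(1) k] IH(2) by simp
qed

lemma zk_d: "q \<in> Q \<Longrightarrow> zk d q = sharp N d q"
  using N2 by (auto simp: zk_def sharp_def cfgs_def fun_eq_iff)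

lemma last_indep:
  assumes C: "\<forall>i<d. mom_shift hbar Q W (N-1) i \<psi> (\<lambda>_ _. 0)" and q: "q \<in> Q"
  shows "\<psi> (sharp N d q) t * Ei (sharp N d q) t = \<psi> q t * Ei q t"
  using zk_all[OF C q, of d t] zk_d[OF q] by simp

end

theorem proposition1:
  fixes N d :: nat and hbar :: real and W :: "cfg \<Rightarrow> real \<Rightarrow> real"
    and H :: qop and \<gamma> :: "'a \<Rightarrow> qop" and \<psi> :: wfun
  assumes "N \<ge> 2" and "d \<ge> 1" and "hbar > 0"
    and "smooth_cfg N d W"
    and "qop_wf (N - 1) d H" and "\<forall>a. qop_wf (N - 1) d (\<gamma> a)"
  shows "quantum_L N d hbar W H \<gamma> \<psi> \<longleftrightarrow>
         (\<exists>\<psi>s. quantum_Lsharp N d hbar H \<gamma> \<psi>s \<and>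
            (\<forall>q\<in>cfgs N d. \<forall>t. \<psi> q t
               = \<psi>s (sharp N d q) t * exp (\<i> * complex_of_real (W q t) / complex_of_real hbar)))"
proof -
  have Wd: "(\<forall>I<N. \<forall>i<d. \<exists>G. has_pd (cfgs N d) W I i G) \<and> (\<exists>G. has_pt (cfgs N d) W G)"
    using assms(4) by (cases rule: smooth_cfg.cases) blast+
  interpret S N d hbar W
    using assms(1,3) Wd by unfold_locales auto
  have NN: "N - 1 < N" using assms(1) by simp
  show ?thesis
  proof
    assume L: "quantum_L N d hbar W H \<gamma> \<psi>"
    obtain Gt \<phi> where L1: "has_pt Q \<psi> Gt" "op_app (mom_shift hbar Q W) (sharp N d) H \<psi> \<phi>"
        "\<forall>q\<in>Q. \<forall>t. \<i> * complex_of_real hbar * Gt q t = \<phi> q t - complex_of_real (pt W q t) * \<psi> q t"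
      using L unfolding quantum_L_def Let_def by blast
    have C: "\<forall>i<d. mom_shift hbar Q W (N-1) i \<psi> (\<lambda>_ _. 0)"
      using L unfolding quantum_L_def Let_def by blast
    have L3: "\<forall>a. \<exists>\<phi>. op_app (mom_shift hbar Q W) (sharp N d) (\<gamma> a) \<psi> \<phi> \<and> (\<forall>q\<in>Q. \<forall>t. \<phi> q t = 0)"
      using L unfolding quantum_L_def Let_def by blast
    define \<psi>s where "\<psi>s q t = \<psi> (sharp N d q) t * Ei (sharp N d q) t" for q t
    have rel: "\<forall>q\<in>Q. \<forall>t. \<psi> q t = \<psi>s (sharp N d q) t * E q t"
    proof (intro ballI allI)
      fix q t assume q: "q \<in> Q"
      have "\<psi>s (sharp N d q) t * E q t = \<psi> q t * (Ei q t * E q t)"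
        unfolding \<psi>s_def using last_indep[OF C q, of t] by simp
      then show "\<psi> q t = \<psi>s (sharp N d q) t * E q t" by (simp add: Ei_E)
    qed
    have rel': "\<psi>s q t = \<psi> q t * Ei q t" if "q \<in> Qs" for q t
      unfolding \<psi>s_def using sharp_id[OF that] by simp
    obtain \<phi>s where P: "op_app (mom_std hbar Qs) id H \<psi>s \<phi>s"
        "\<forall>q\<in>Q. \<forall>t. \<phi> q t = \<phi>s (sharp N d q) t * E q t"
      using bwd[OF L1(2) assms(5) rel] by blast
    define Gts where "Gts q t = \<psi> q t * (Ei q t * (- (\<i> / complex_of_real hbar) * of_real (pt W q t)))
      + Gt q t * Ei q t" for q t
    have hpt: "has_pt Qs \<psi>s Gts" unfolding has_pt_def
    proof (intro ballI allI)
      fix q t assume q: "q \<in> Qs"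
      have qQ: "q \<in> Q" using QsQ[OF q] .
      have eq: "(\<lambda>s. \<psi>s q s) = (\<lambda>s. \<psi> q s * Ei q s)" using rel'[OF q] by auto
      have d1: "((\<lambda>s. \<psi> q s) has_vector_derivative Gt q t) (at t)"
        using L1(1) qQ unfolding has_pt_def by blast
      show "((\<lambda>s. \<psi>s q s) has_vector_derivative Gts q t) (at t)"
        using has_vector_derivative_mult[OF d1 Eitime[OF qQ]] unfolding eq Gts_def by simp
    qed
    have sch: "\<forall>q\<in>Qs. \<forall>t. \<i> * complex_of_real hbar * Gts q t = \<phi>s q t"
    proof (intro ballI allI)
      fix q t assume q: "q \<in> Qs"
      have qQ: "q \<in> Q" using QsQ[OF q] .
      have ph: "\<phi> q t = \<phi>s q t * E q t" using P(2) qQ sharp_id[OF q] by metis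
      have "\<i> * complex_of_real hbar * Gts q t
          = \<psi> q t * Ei q t * complex_of_real (pt W q t) + (\<i> * complex_of_real hbar * Gt q t) * Ei q t"
        unfolding Gts_def using hb0 by (simp add: field_simps)
      also have "\<dots> = \<phi> q t * Ei q t"
      proof -
        have "\<i> * complex_of_real hbar * Gt q t = \<phi> q t - complex_of_real (pt W q t) * \<psi> q t"
          using L1(3) qQ by blast
        then have "\<phi> q t = \<i> * complex_of_real hbar * Gt q t + complex_of_real (pt W q t) * \<psi> q t"
          by (simp add: algebra_simps)
        then show ?thesis by (simp add: algebra_simps)
      qed
      also have "\<dots> = \<phi>s q t" unfolding ph by (simp add: E_Ei mult.assoc)
      finally show "\<i> * complex_of_real hbar * Gts q t = \<phi>s q t" .
    qed
    have gam: "\<forall>a. \<exists>\<phi>. op_app (mom_std hbar Qs) id (\<gamma> a) \<psi>s \<phi> \<and> (\<forall>q\<in>Qs. \<forall>t. \<phi> q t = 0)"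
    proof
      fix a
      obtain \<phi>a where a: "op_app (mom_shift hbar Q W) (sharp N d) (\<gamma> a) \<psi> \<phi>a" "\<forall>q\<in>Q. \<forall>t. \<phi>a q t = 0"
        using L3 by blast
      obtain \<phi>as where as: "op_app (mom_std hbar Qs) id (\<gamma> a) \<psi>s \<phi>as"
          "\<forall>q\<in>Q. \<forall>t. \<phi>a q t = \<phi>as (sharp N d q) t * E q t"
        using bwd[OF a(1) _ rel] assms(6) by blast
      have "\<forall>q\<in>Qs. \<forall>t. \<phi>as q t = 0"
      proof (intro ballI allI)
        fix q t assume q: "q \<in> Qs"
        have qQ: "q \<in> Q" using QsQ[OF q] .
        have "\<phi>as q t * E q t = 0" using as(2) a(2) qQ sharp_id[OF q] by metis
        then show "\<phi>as q t = 0" using E_nz by simp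
      qed
      then show "\<exists>\<phi>. op_app (mom_std hbar Qs) id (\<gamma> a) \<psi>s \<phi> \<and> (\<forall>q\<in>Qs. \<forall>t. \<phi> q t = 0)"
        using as(1) by blast
    qed
    have "quantum_Lsharp N d hbar H \<gamma> \<psi>s"
      unfolding quantum_Lsharp_def Let_def using hpt P(1) sch gam by blast
    then show "\<exists>\<psi>s. quantum_Lsharp N d hbar H \<gamma> \<psi>s \<and>
            (\<forall>q\<in>cfgs N d. \<forall>t. \<psi> q t
               = \<psi>s (sharp N d q) t * exp (\<i> * complex_of_real (W q t) / complex_of_real hbar))"
      using rel unfolding E_def by blast
  next
    assume "\<exists>\<psi>s. quantum_Lsharp N d hbar H \<gamma> \<psi>s \<and>
            (\<forall>q\<in>cfgs N d. \<forall>t. \<psi> q t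
               = \<psi>s (sharp N d q) t * exp (\<i> * complex_of_real (W q t) / complex_of_real hbar))"
    then obtain \<psi>s where Ls: "quantum_Lsharp N d hbar H \<gamma> \<psi>s"
        and rel: "\<forall>q\<in>Q. \<forall>t. \<psi> q t = \<psi>s (sharp N d q) t * E q t"
      unfolding E_def by blast
    obtain Gts \<phi>s where S1: "has_pt Qs \<psi>s Gts" "op_app (mom_std hbar Qs) id H \<psi>s \<phi>s"
        "\<forall>q\<in>Qs. \<forall>t. \<i> * complex_of_real hbar * Gts q t = \<phi>s q t"
      using Ls unfolding quantum_Lsharp_def Let_def by blast
    have S2: "\<forall>a. \<exists>\<phi>. op_app (mom_std hbar Qs) id (\<gamma> a) \<psi>s \<phi> \<and> (\<forall>q\<in>Qs. \<forall>t. \<phi> q t = 0)"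
      using Ls unfolding quantum_Lsharp_def Let_def by blast
    obtain \<phi> where P: "op_app (mom_shift hbar Q W) (sharp N d) H \<psi> \<phi>"
        "\<forall>q\<in>Q. \<forall>t. \<phi> q t = \<phi>s (sharp N d q) t * E q t"
      using fwd[OF S1(2) assms(5) rel] by blast
    define Gt where "Gt q t = \<psi>s (sharp N d q) t * (E q t * ((\<i> / complex_of_real hbar) * of_real (pt W q t)))
      + Gts (sharp N d q) t * E q t" for q t
    have hpt: "has_pt Q \<psi> Gt" unfolding has_pt_def
    proof (intro ballI allI)
      fix q t assume q: "q \<in> Q"
      have eq: "(\<lambda>s. \<psi> q s) = (\<lambda>s. \<psi>s (sharp N d q) s * E q s)" using rel q by auto
      have d1: "((\<lambda>s. \<psi>s (sharp N d q) s) has_vector_derivative Gts (sharp N d q) t) (at t)"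
        using S1(1) sharp_in[of N d q] unfolding has_pt_def by blast
      show "((\<lambda>s. \<psi> q s) has_vector_derivative Gt q t) (at t)"
        using has_vector_derivative_mult[OF d1 Etime[OF q]] unfolding eq Gt_def by simp
    qed
    have sch: "\<forall>q\<in>Q. \<forall>t. \<i> * complex_of_real hbar * Gt q t = \<phi> q t - complex_of_real (pt W q t) * \<psi> q t"
    proof (intro ballI allI)
      fix q t assume q: "q \<in> Q"
      have g: "\<i> * complex_of_real hbar * Gts (sharp N d q) t = \<phi>s (sharp N d q) t"
        using S1(3) sharp_in[of N d q] by blast
      have "\<i> * complex_of_real hbar * Gt q t
         = - (\<psi>s (sharp N d q) t * E q t * complex_of_real (pt W q t))
           + (\<i> * complex_of_real hbar * Gts (sharp N d q) t) * E q t"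
        unfolding Gt_def using hb0 by (simp add: field_simps)
      then show "\<i> * complex_of_real hbar * Gt q t = \<phi> q t - complex_of_real (pt W q t) * \<psi> q t"
        using g P(2) rel q by (simp add: algebra_simps)
    qed
    have C: "\<forall>i<d. mom_shift hbar Q W (N-1) i \<psi> (\<lambda>_ _. 0)"
    proof (intro allI impI)
      fix i assume i: "i < d"
      define G where "G q t = \<psi>s (sharp N d q) t * (E q t * ((\<i> / complex_of_real hbar) * of_real (pd W (N-1) i q t)))" for q t
      have hpd: "has_pd Q \<psi> (N-1) i G" unfolding has_pd_def
      proof (intro ballI allI)
        fix q t assume q: "q \<in> Q"
        have eq: "(\<lambda>s. \<psi> (cupd q (N-1) i s) t) = (\<lambda>s. \<psi>s (sharp N d q) t * E (cupd q (N-1) i s) t)"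
          using rel cupd_in[OF q NN i] sharp_cupd_last[of N d q i] by auto
        show "((\<lambda>s. \<psi> (cupd q (N-1) i s) t) has_vector_derivative G q t) (at (q (N-1) i))"
          unfolding eq G_def by (rule has_vector_derivative_mult_right[OF Eline[OF q NN i]])
      qed
      show "mom_shift hbar Q W (N-1) i \<psi> (\<lambda>_ _. 0)"
        unfolding mom_shift_def
      proof (intro exI conjI ballI allI)
        show "has_pd Q \<psi> (N-1) i G" by (rule hpd)
        fix q t assume q: "q \<in> Q"
        show "0 = - \<i> * complex_of_real hbar * G q t - complex_of_real (pd W (N - 1) i q t) * \<psi> q t"
          unfolding G_def using rel q hb0 by (simp add: field_simps)
      qed
    qed
    have gam: "\<forall>a. \<exists>\<phi>. op_app (mom_shift hbar Q W) (sharp N d) (\<gamma> a) \<psi> \<phi> \<and> (\<forall>q\<in>Q. \<forall>t. \<phi> q t = 0)"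
    proof
      fix a
      obtain \<phi>as where as: "op_app (mom_std hbar Qs) id (\<gamma> a) \<psi>s \<phi>as" "\<forall>q\<in>Qs. \<forall>t. \<phi>as q t = 0"
        using S2 by blast
      obtain \<phi>a where a: "op_app (mom_shift hbar Q W) (sharp N d) (\<gamma> a) \<psi> \<phi>a"
          "\<forall>q\<in>Q. \<forall>t. \<phi>a q t = \<phi>as (sharp N d q) t * E q t"
        using fwd[OF as(1) _ rel] assms(6) by blast
      show "\<exists>\<phi>. op_app (mom_shift hbar Q W) (sharp N d) (\<gamma> a) \<psi> \<phi> \<and> (\<forall>q\<in>Q. \<forall>t. \<phi> q t = 0)"
        using a as(2) sharp_in[of N d] by auto
    qed
    show "quantum_L N d hbar W H \<gamma> \<psi>"
      unfolding quantum_L_def Let_def using hpt P(1) sch C gam by blast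
  qed
qed

end
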